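(* Let $h_6$ be the real two-photon Lie algebra. A Lie bialgebra structure $\delta$ on $h_6$ satisfies $\delta(N)=0$ if and only if there exist real numbers $c_1,c_2$ such that $\delta(X)=[1\otimes X+X\otimes 1,\,r]$ for all $X\in h_6$, with $$r=c_1\,N\wedge M+c_2\,A_+\wedge A_- .$$ Explicitly, $\delta(N)=\delta(M)=0$, $\delta(A_+)=-(c_1+c_2)A_+\wedge M$, $\delta(A_-)=(c_1-c_2)A_-\wedge M$, $\delta(B_+)=-2c_1B_+\wedge M$, $\delta(B_-)=2c_1B_-\wedge M$. Moreover, for this $r$ one has $[[r,r]]=-c_2^2\,A_+\wedge A_-\wedge M$, so $r$ is a solution of the classical Yang–Baxter equation (non-standard case) if and only if $c_2=0$, and is standard (nonzero Schouten bracket, satisfying only the modified classical Yang–Baxter equation) if and only if $c_2\neq 0$.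
   Context: The two-photon Lie algebra $h_6$ is the real Lie algebra with basis $\{N,A_+,A_-,B_+,B_-,M\}$ and brackets $[N,A_+]=A_+$, $[N,A_-]=-A_-$, $[A_-,A_+]=M$, $[N,B_+]=2B_+$, $[N,B_-]=-2B_-$, $[B_-,B_+]=4N+2M$, $[A_+,B_-]=-2A_-$, $[A_+,B_+]=0$, $[A_-,B_+]=2A_+$, $[A_-,B_-]=0$, and $M$ central. A Lie bialgebra structure on a Lie algebra $g$ is a linear map $\delta:g\to g\otimes g$ which is a 1-cocycle, i.e. $\delta([X,Y])=[\delta(X),1\otimes Y+Y\otimes 1]+[1\otimes X+X\otimes 1,\delta(Y)]$, and whose dual map $g^*\otimes g^*\to g^*$ is a Lie bracket. For $r\in g\wedge g$, $r=\sum r^{ij}X_i\otimes X_j$, the Schouten bracket is $[[r,r]]=[r_{12},r_{13}]+[r_{12},r_{23}]+[r_{13},r_{23}]$, with $r_{12}=\sum r^{ij}X_i\otimes X_j\otimes 1$, $r_{13}=\sum r^{ij}X_i\otimes 1\otimes X_j$, $r_{23}=\sum r^{ij}1\otimes X_i\otimes X_j$; the classical Yang–Baxter equation is $[[r,r]]=0$. Here $X\wedge Y=X\otimes Y-Y\otimes X$. *)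

theory Defs
  imports Complex_Main
begin

text \<open>Basis N, A+, A-, B+, B-, M (written N, Ap, Am, Bp, Bm, M).
  Elements of h6 are coordinate functions gen => real, elements of h6 (x) h6 are
  coefficient arrays gen => gen => real (coefficient of e_j (x) e_k), and likewise
  for the triple tensor product.\<close>

datatype gen = N | Ap | Am | Bp | Bm | M

lemma UNIV_gen: "(UNIV :: gen set) = {N, Ap, Am, Bp, Bm, M}"
  by (auto intro: gen.exhaust)

instance gen :: finite
  by standard (simp add: UNIV_gen)

type_synonym vec = "gen \<Rightarrow> real"
type_synonym tensor2 = "gen \<Rightarrow> gen \<Rightarrow> real"
type_synonym tensor3 = "gen \<Rightarrow> gen \<Rightarrow> gen \<Rightarrow> real"

definition bas :: "gen \<Rightarrow> vec" where
  "bas a = (\<lambda>b. if b = a then 1 else 0)"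

fun brb :: "gen \<Rightarrow> gen \<Rightarrow> vec" where
  "brb N Ap = bas Ap"
| "brb Ap N = (\<lambda>t. - bas Ap t)"
| "brb N Am = (\<lambda>t. - bas Am t)"
| "brb Am N = bas Am"
| "brb Am Ap = bas M"
| "brb Ap Am = (\<lambda>t. - bas M t)"
| "brb N Bp = (\<lambda>t. 2 * bas Bp t)"
| "brb Bp N = (\<lambda>t. -2 * bas Bp t)"
| "brb N Bm = (\<lambda>t. -2 * bas Bm t)"
| "brb Bm N = (\<lambda>t. 2 * bas Bm t)"
| "brb Bm Bp = (\<lambda>t. 4 * bas N t + 2 * bas M t)"
| "brb Bp Bm = (\<lambda>t. -4 * bas N t - 2 * bas M t)"
| "brb Ap Bm = (\<lambda>t. -2 * bas Am t)"
| "brb Bm Ap = (\<lambda>t. 2 * bas Am t)"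
| "brb Am Bp = (\<lambda>t. 2 * bas Ap t)"
| "brb Bp Am = (\<lambda>t. -2 * bas Ap t)"
| "brb _ _ = (\<lambda>t. 0)"

definition lie :: "vec \<Rightarrow> vec \<Rightarrow> vec" where
  "lie x y = (\<lambda>t. \<Sum>a\<in>UNIV. \<Sum>b\<in>UNIV. x a * y b * brb a b t)"

definition tensor :: "vec \<Rightarrow> vec \<Rightarrow> tensor2" where
  "tensor x y = (\<lambda>j k. x j * y k)"

definition wedge :: "vec \<Rightarrow> vec \<Rightarrow> tensor2" where
  "wedge x y = (\<lambda>j k. x j * y k - y j * x k)"

definition wedge3 :: "vec \<Rightarrow> vec \<Rightarrow> vec \<Rightarrow> tensor3" where
  "wedge3 x y z = (\<lambda>i j k.
      x i * y j * z k + y i * z j * x k + z i * x j * y k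
    - y i * x j * z k - x i * z j * y k - z i * y j * x k)"

text \<open>Adjoint action [1(x)X + X(x)1, T] on g (x) g, so that
  [T, 1(x)X + X(x)1] = - adt X T.\<close>
definition adt :: "vec \<Rightarrow> tensor2 \<Rightarrow> tensor2" where
  "adt X T = (\<lambda>j k. (\<Sum>a\<in>UNIV. T a k * lie X (bas a) j)
                  + (\<Sum>b\<in>UNIV. T j b * lie X (bas b) k))"

text \<open>Adjoint action [1(x)1(x)X + 1(x)X(x)1 + X(x)1(x)1, T] on g (x) g (x) g.\<close>
definition adt3 :: "vec \<Rightarrow> tensor3 \<Rightarrow> tensor3" where
  "adt3 X T = (\<lambda>i j k. (\<Sum>a\<in>UNIV. T a j k * lie X (bas a) i)
                    + (\<Sum>a\<in>UNIV. T i a k * lie X (bas a) j)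
                    + (\<Sum>a\<in>UNIV. T i j a * lie X (bas a) k))"

definition cob :: "tensor2 \<Rightarrow> vec \<Rightarrow> tensor2" where
  "cob r X = adt X r"

text \<open>Schouten bracket [[r,r]] = [r12,r13] + [r12,r23] + [r13,r23].\<close>
definition schouten :: "tensor2 \<Rightarrow> tensor3" where
  "schouten r = (\<lambda>x y z. \<Sum>i\<in>UNIV. \<Sum>j\<in>UNIV. \<Sum>k\<in>UNIV. \<Sum>l\<in>UNIV. r i j * r k l *
      ( brb i k x * bas j y * bas l z
      + bas i x * brb j k y * bas l z
      + bas i x * bas k y * brb j l z))"

definition CYBE :: "tensor2 \<Rightarrow> bool" where
  "CYBE r \<longleftrightarrow> schouten r = (\<lambda>x y z. 0)"

definition standard_r :: "tensor2 \<Rightarrow> bool" where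
  "standard_r r \<longleftrightarrow> schouten r \<noteq> (\<lambda>x y z. 0) \<and>
      (\<forall>X. adt3 X (schouten r) = (\<lambda>x y z. 0))"

definition linear_delta :: "(vec \<Rightarrow> tensor2) \<Rightarrow> bool" where
  "linear_delta \<delta> \<longleftrightarrow>
     (\<forall>x y. \<delta> (\<lambda>i. x i + y i) = (\<lambda>j k. \<delta> x j k + \<delta> y j k)) \<and>
     (\<forall>c x. \<delta> (\<lambda>i. c * x i) = (\<lambda>j k. c * \<delta> x j k))"

definition cocycle :: "(vec \<Rightarrow> tensor2) \<Rightarrow> bool" where
  "cocycle \<delta> \<longleftrightarrow> (\<forall>X Y. \<delta> (lie X Y) = (\<lambda>j k. - adt Y (\<delta> X) j k + adt X (\<delta> Y) j k))"

text \<open>The dual map g* (x) g* -> g*, (xi, eta) |-> (xi (x) eta) o delta, with g* in the dual coordinates.\<close>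
definition dual_br :: "(vec \<Rightarrow> tensor2) \<Rightarrow> vec \<Rightarrow> vec \<Rightarrow> vec" where
  "dual_br \<delta> \<xi> \<eta> = (\<lambda>i. \<Sum>j\<in>UNIV. \<Sum>k\<in>UNIV. \<delta> (bas i) j k * \<xi> j * \<eta> k)"

text \<open>The dual map is a Lie bracket (it is bilinear by construction): alternating and Jacobi.\<close>
definition dual_is_lie :: "(vec \<Rightarrow> tensor2) \<Rightarrow> bool" where
  "dual_is_lie \<delta> \<longleftrightarrow>
     (\<forall>\<xi>. dual_br \<delta> \<xi> \<xi> = (\<lambda>i. 0)) \<and>
     (\<forall>\<xi> \<eta> \<zeta>. (\<lambda>i. dual_br \<delta> \<xi> (dual_br \<delta> \<eta> \<zeta>) i + dual_br \<delta> \<eta> (dual_br \<delta> \<zeta> \<xi>) i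
                   + dual_br \<delta> \<zeta> (dual_br \<delta> \<xi> \<eta>) i) = (\<lambda>i. 0))"

definition lie_bialgebra :: "(vec \<Rightarrow> tensor2) \<Rightarrow> bool" where
  "lie_bialgebra \<delta> \<longleftrightarrow> linear_delta \<delta> \<and> cocycle \<delta> \<and> dual_is_lie \<delta>"

definition rr :: "real \<Rightarrow> real \<Rightarrow> tensor2" where
  "rr c1 c2 = (\<lambda>j k. c1 * wedge (bas N) (bas M) j k + c2 * wedge (bas Ap) (bas Am) j k)"

end

theory Submission
  imports Defs
begin


lemma sum_gen: "(\<Sum>a\<in>UNIV. f a) = f N + f Ap + f Am + f Bp + f Bm + (f M :: real)"
  by (simp add: UNIV_gen)

lemma sum_bas1: "(\<Sum>b\<in>UNIV. bas y b * f b) = (f y :: real)"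
  by (cases y) (simp_all add: sum_gen bas_def)
lemma sum_bas2: "(\<Sum>b\<in>UNIV. f b * bas y b) = (f y :: real)"
  by (cases y) (simp_all add: sum_gen bas_def)

lemma lie_bas_l: "lie X (bas y) t = (\<Sum>b\<in>UNIV. X b * brb b y t)"
  by (cases y) (simp_all add: lie_def sum_gen bas_def)

lemma lie_bas: "lie (bas x) (bas y) = brb x y"
  by (rule ext) (simp add: lie_bas_l sum_bas1)

lemma adt_bas: "adt (bas x) T j k = (\<Sum>a\<in>UNIV. T a k * brb x a j) + (\<Sum>b\<in>UNIV. T j b * brb x b k)"
  by (simp add: adt_def lie_bas)

definition wt :: "gen \<Rightarrow> real" where
 "wt a = (case a of N \<Rightarrow> 0 | Ap \<Rightarrow> 1 | Am \<Rightarrow> -1 | Bp \<Rightarrow> 2 | Bm \<Rightarrow> -2 | M \<Rightarrow> 0)"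

lemma brbN: "brb N a t = wt a * bas a t"
  by (cases a) (auto simp: wt_def bas_def)

lemma cobN: "cob (rr c1 c2) (bas N) = (\<lambda>j k. 0)"
  apply (rule ext, rule ext)
  subgoal for j k unfolding cob_def adt_bas by (cases j; cases k) (simp_all add: sum_gen rr_def wedge_def bas_def)
  done

lemma cobAp: "cob (rr c1 c2) (bas Ap) = (\<lambda>j k. - (c1 + c2) * wedge (bas Ap) (bas M) j k)"
  apply (rule ext, rule ext)
  subgoal for j k unfolding cob_def adt_bas by (cases j; cases k) (simp_all add: sum_gen rr_def wedge_def bas_def)
  done

lemma bas_app: "bas a b = (if b = a then 1 else 0)" by (simp add: bas_def)

lemma cobM: "cob (rr c1 c2) (bas M) = (\<lambda>j k. 0)"
  apply (rule ext, rule ext)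
  subgoal for j k unfolding cob_def adt_bas by (cases j; cases k) (simp_all add: sum_gen rr_def wedge_def bas_def)
  done

lemma cobAm: "cob (rr c1 c2) (bas Am) = (\<lambda>j k. (c1 - c2) * wedge (bas Am) (bas M) j k)"
  apply (rule ext, rule ext)
  subgoal for j k unfolding cob_def adt_bas by (cases j; cases k) (simp_all add: sum_gen rr_def wedge_def bas_def)
  done

lemma cobBp: "cob (rr c1 c2) (bas Bp) = (\<lambda>j k. - 2 * c1 * wedge (bas Bp) (bas M) j k)"
  apply (rule ext, rule ext)
  subgoal for j k unfolding cob_def adt_bas by (cases j; cases k) (simp_all add: sum_gen rr_def wedge_def bas_def)
  done

lemma cobBm: "cob (rr c1 c2) (bas Bm) = (\<lambda>j k. 2 * c1 * wedge (bas Bm) (bas M) j k)"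
  apply (rule ext, rule ext)
  subgoal for j k unfolding cob_def adt_bas by (cases j; cases k) (simp_all add: sum_gen rr_def wedge_def bas_def)
  done

lemma m1: "(a::real) * (if P then 1 else 0) = (if P then a else 0)" by simp
lemma m2: "(if P then 1 else 0) * (a::real) = (if P then a else 0)" by simp
lemma m3: "(if P then a else 0) * (b::real) = (if P then a * b else 0)" by simp
lemma m4: "(b::real) * (if P then a else 0) = (if P then b * a else 0)" by simp

lemma m5: "(\<Sum>k\<in>S. if P then f k else (0::real)) = (if P then (\<Sum>k\<in>S. f k) else 0)" by simp

lemma schouten_alt: "schouten r x y z =
   (\<Sum>i\<in>UNIV. \<Sum>k\<in>UNIV. r i y * r k z * brb i k x)
 + (\<Sum>j\<in>UNIV. \<Sum>k\<in>UNIV. r x j * r k z * brb j k y)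
 + (\<Sum>j\<in>UNIV. \<Sum>l\<in>UNIV. r x j * r y l * brb j l z)"
  unfolding schouten_def bas_def
  by (simp add: sum.distrib distrib_left m1 m2 m3 m4 m5)

lemma schout: "schouten (rr c1 c2) = (\<lambda>x y z. - (c2 ^ 2) * wedge3 (bas Ap) (bas Am) (bas M) x y z)"
  apply (rule ext)+
  subgoal for x y z unfolding schouten_alt
    by (cases x; cases y; cases z) (simp_all add: sum_gen rr_def wedge_def bas_def wedge3_def power2_eq_square)
  done

lemma adt3_w: "adt3 X (\<lambda>x y z. c * wedge3 (bas Ap) (bas Am) (bas M) x y z) = (\<lambda>x y z. 0)"
  apply (rule ext)+
  subgoal for x y z unfolding adt3_def lie_bas_l
    by (cases x; cases y; cases z) (simp_all add: sum_gen bas_def wedge3_def)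
  done




lemma lin_zero: "linear_delta \<delta> \<Longrightarrow> \<delta> (\<lambda>i. 0) = (\<lambda>j k. 0)"
proof -
  assume "linear_delta \<delta>"
  then have "\<forall>c x. \<delta> (\<lambda>i. c * x i) = (\<lambda>j k. c * \<delta> x j k)"
    unfolding linear_delta_def by blast
  from spec[OF spec[OF this, of 0], of "\<lambda>i. 0"] show ?thesis by simp
qed

lemma lin_sum: assumes lin: "linear_delta \<delta>" and fin: "finite S" shows
   "\<delta> (\<lambda>i. \<Sum>a\<in>S. X a * bas a i) = (\<lambda>j k. \<Sum>a\<in>S. X a * \<delta> (bas a) j k)"
  using fin
proof (induction S rule: finite_induct)
  case empty
  then show ?case by (simp add: lin_zero[OF lin])
next
  case (insert x F)
  have add: "\<delta> (\<lambda>i. f i + g i) = (\<lambda>j k. \<delta> f j k + \<delta> g j k)" for f g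
    using lin unfolding linear_delta_def by blast
  have "\<delta> (\<lambda>i. \<Sum>a\<in>insert x F. X a * bas a i) = \<delta> (\<lambda>i. X x * bas x i + (\<Sum>a\<in>F. X a * bas a i))"
    using insert by simp
  also have "\<dots> = (\<lambda>j k. \<delta> (\<lambda>i. X x * bas x i) j k + \<delta> (\<lambda>i. \<Sum>a\<in>F. X a * bas a i) j k)"
    by (rule add)
  also have "\<delta> (\<lambda>i. X x * bas x i) = (\<lambda>j k. X x * \<delta> (bas x) j k)"
    using lin unfolding linear_delta_def by blast
  finally show ?case using insert by simp
qed

lemma vec_decomp: "(\<lambda>i. \<Sum>a\<in>UNIV. X a * bas a i) = X"
  apply (rule ext)
  subgoal for i by (cases i) (simp_all add: sum_gen bas_def)
  done

lemma lin_expand: "linear_delta \<delta> \<Longrightarrow> \<delta> X j k = (\<Sum>a\<in>UNIV. X a * \<delta> (bas a) j k)"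
  using lin_sum[of \<delta> UNIV X] by (simp add: vec_decomp)

lemma swap_aux: "(\<Sum>a\<in>UNIV. (f a::real) * (\<Sum>c\<in>UNIV. X c * g c a)) = (\<Sum>c\<in>UNIV. X c * (\<Sum>a\<in>UNIV. f a * g c a))"
proof -
  have "(\<Sum>a\<in>UNIV. (f a::real) * (\<Sum>c\<in>UNIV. X c * g c a)) = (\<Sum>a\<in>UNIV. \<Sum>c\<in>UNIV. f a * (X c * g c a))"
    by (simp add: sum_distrib_left)
  also have "\<dots> = (\<Sum>c\<in>UNIV. \<Sum>a\<in>UNIV. f a * (X c * g c a))"
    by (rule sum.swap)
  also have "\<dots> = (\<Sum>c\<in>UNIV. X c * (\<Sum>a\<in>UNIV. f a * g c a))"
    by (simp add: sum_distrib_left mult_ac)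
  finally show ?thesis .
qed

lemma cob_expand: "cob r X j k = (\<Sum>a\<in>UNIV. X a * cob r (bas a) j k)"
proof -
  have "cob r X j k = (\<Sum>a\<in>UNIV. r a k * (\<Sum>b\<in>UNIV. X b * brb b a j)) + (\<Sum>a\<in>UNIV. r j a * (\<Sum>b\<in>UNIV. X b * brb b a k))"
    unfolding cob_def adt_def lie_bas_l by (rule refl)
  also have "\<dots> = (\<Sum>b\<in>UNIV. X b * (\<Sum>a\<in>UNIV. r a k * brb b a j)) + (\<Sum>b\<in>UNIV. X b * (\<Sum>a\<in>UNIV. r j a * brb b a k))"
    by (rule arg_cong2[where f="(+)"]; rule swap_aux)
  also have "\<dots> = (\<Sum>a\<in>UNIV. X a * cob r (bas a) j k)"
    unfolding cob_def adt_bas by (simp only: distrib_left sum.distrib)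
  finally show ?thesis .
qed

lemma dual_bas: "dual_br \<delta> (bas a) v i = (\<Sum>k\<in>UNIV. \<delta> (bas i) a k * v k)"
  unfolding dual_br_def bas_def by (simp add: m1 m2 m3 m4 m5)




lemma part1:
  assumes LB: "lie_bialgebra \<delta>" and D0: "\<delta> (bas N) = (\<lambda>j k. 0)"
  shows "\<exists>c1 c2. \<forall>X. \<delta> X = cob (rr c1 c2) X"
proof -
  have lin: "linear_delta \<delta>" and cc: "cocycle \<delta>" and dl: "dual_is_lie \<delta>"
    using LB unfolding lie_bialgebra_def by auto
  have coc: "(\<Sum>t\<in>UNIV. brb x y t * \<delta> (bas t) j k) = - adt (bas y) (\<delta> (bas x)) j k + adt (bas x) (\<delta> (bas y)) j k" for x y j k
  proof -
    have "\<delta> (lie (bas x) (bas y)) j k = - adt (bas y) (\<delta> (bas x)) j k + adt (bas x) (\<delta> (bas y)) j k"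
      using cc unfolding cocycle_def by metis
    then show ?thesis by (simp add: lie_bas lin_expand[OF lin, of "brb x y"])
  qed
  have as: "\<delta> (bas i) j k = - \<delta> (bas i) k j" for i j k
  proof -
    have h: "dual_br \<delta> \<xi> \<xi> i = 0" for \<xi> using dl unfolding dual_is_lie_def by metis
    have "dual_br \<delta> (bas j) (bas j) i = 0" "dual_br \<delta> (bas k) (bas k) i = 0"
      "dual_br \<delta> (\<lambda>t. bas j t + bas k t) (\<lambda>t. bas j t + bas k t) i = 0" by (rule h)+
    then show ?thesis unfolding dual_br_def by (simp add: algebra_simps sum.distrib bas_def m1 m2 m3 m4 m5)
  qed
  have wt: "wt y * \<delta> (bas y) j k = (wt j + wt k) * \<delta> (bas y) j k" for y j k
  proof -
    have "(\<Sum>t\<in>UNIV. brb N y t * \<delta> (bas t) j k) = - adt (bas y) (\<delta> (bas N)) j k + adt (bas N) (\<delta> (bas y)) j k"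
      by (rule coc)
    then show ?thesis unfolding adt_bas D0 brbN unfolding bas_def by (simp add: m1 m2 m3 m4 m5 algebra_simps)
  qed
  have zr: "wt y \<noteq> wt j + wt k \<Longrightarrow> \<delta> (bas y) j k = 0" for y j k
    using wt[of y j k] by auto
  have e0: "(1) * \<delta> (bas Ap) N Ap + (1) * \<delta> (bas Am) N Am + (-1) * \<delta> (bas M) N M = 0"
    using coc[of Ap Am N M] unfolding adt_bas sum_gen by (simp add: bas_app zr wt_def; linarith)
  have e1: "(1) * \<delta> (bas Ap) Ap N + (2) * \<delta> (bas Ap) Bp Am + (1) * \<delta> (bas Am) N Am + (2) * \<delta> (bas Am) Ap Bm + (-1) * \<delta> (bas M) Ap Am = 0"
    using coc[of Ap Am Ap Am] unfolding adt_bas sum_gen by (simp add: bas_app zr wt_def; linarith)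
  have e2: "(-1) * \<delta> (bas M) Bp Bm = 0"
    using coc[of Ap Am Bp Bm] unfolding adt_bas sum_gen by (simp add: bas_app zr wt_def; linarith)
  have e3: "(-2) * \<delta> (bas Ap) Ap N + (-2) * \<delta> (bas Ap) Am Bp + (1) * \<delta> (bas Bp) N Bp = 0"
    using coc[of Ap Bp Ap Bp] unfolding adt_bas sum_gen by (simp add: bas_app zr wt_def; linarith)
  have e4: "(2) * \<delta> (bas Ap) N Ap + (4) * \<delta> (bas Ap) Bp Am + (-2) * \<delta> (bas Am) N Am + (2) * \<delta> (bas Bm) N Bm = 0"
    using coc[of Ap Bm N Am] unfolding adt_bas sum_gen by (simp add: bas_app zr wt_def; linarith)
  have e5: "(2) * \<delta> (bas Ap) Ap N + (-2) * \<delta> (bas Am) Ap Bm + (1) * \<delta> (bas Bm) N Bm = 0"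
    using coc[of Ap Bm Ap Bm] unfolding adt_bas sum_gen by (simp add: bas_app zr wt_def; linarith)
  have e6: "(2) * \<delta> (bas Ap) Ap M + (2) * \<delta> (bas Ap) Am Bp + (-2) * \<delta> (bas Am) Am M + (1) * \<delta> (bas Bm) Am Am + (2) * \<delta> (bas Bm) Bm M = 0"
    using coc[of Ap Bm Am M] unfolding adt_bas sum_gen by (simp add: bas_app zr wt_def; linarith)
  have e7: "(1) * \<delta> (bas M) N M + (1) * \<delta> (bas M) Ap Am = 0"
    using coc[of Ap M Ap M] unfolding adt_bas sum_gen by (simp add: bas_app zr wt_def; linarith)
  have e8: "(2) * \<delta> (bas Ap) Ap M + (-2) * \<delta> (bas Am) Ap Bm + (-2) * \<delta> (bas Am) Am M + (-1) * \<delta> (bas Bp) Ap Ap + (-2) * \<delta> (bas Bp) Bp M = 0"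
    using coc[of Am Bp Ap M] unfolding adt_bas sum_gen by (simp add: bas_app zr wt_def; linarith)
  have e9: "(2) * \<delta> (bas Ap) Am Bp + (-2) * \<delta> (bas Am) Am N + (-1) * \<delta> (bas Bp) N Bp = 0"
    using coc[of Am Bp Am Bp] unfolding adt_bas sum_gen by (simp add: bas_app zr wt_def; linarith)
  note asl = as[of Ap N Ap] as[of Ap Ap M] as[of Ap Am Bp] as[of Am N Am] as[of Am Ap Bm] as[of Am Am M] as[of Bp N Bp] as[of Bp Bp M] as[of Bm N Bm] as[of Bm Bm M] as[of M N M] as[of M Ap Am] as[of M Bp Bm] as[of Bp Ap Ap] as[of Bm Am Am] as[of M N N] as[of M M M]
  have v0: "\<delta> (bas Ap) N Ap = 0"
    using e0 e1 e2 e3 e4 e5 e6 e7 e8 e9 asl by linarith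
  have v1: "\<delta> (bas Ap) Ap N = 0"
    using e0 e1 e2 e3 e4 e5 e6 e7 e8 e9 asl by linarith
  have v2: "\<delta> (bas Ap) M Ap = \<delta> (bas Am) M Am - \<delta> (bas Bm) Bm N/2 - \<delta> (bas Bm) M Bm"
    using e0 e1 e2 e3 e4 e5 e6 e7 e8 e9 asl by linarith
  have v3: "\<delta> (bas Ap) Ap M = - \<delta> (bas Am) M Am + \<delta> (bas Bm) Bm N/2 + \<delta> (bas Bm) M Bm"
    using e0 e1 e2 e3 e4 e5 e6 e7 e8 e9 asl by linarith
  have v4: "\<delta> (bas Ap) Am Bp = - \<delta> (bas Bm) Bm N/2"
    using e0 e1 e2 e3 e4 e5 e6 e7 e8 e9 asl by linarith
  have v5: "\<delta> (bas Ap) Bp Am = \<delta> (bas Bm) Bm N/2"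
    using e0 e1 e2 e3 e4 e5 e6 e7 e8 e9 asl by linarith
  have v6: "\<delta> (bas Am) N Am = 0"
    using e0 e1 e2 e3 e4 e5 e6 e7 e8 e9 asl by linarith
  have v7: "\<delta> (bas Am) Am N = 0"
    using e0 e1 e2 e3 e4 e5 e6 e7 e8 e9 asl by linarith
  have v8: "\<delta> (bas Am) Am M = - \<delta> (bas Am) M Am"
    using e0 e1 e2 e3 e4 e5 e6 e7 e8 e9 asl by linarith
  have v9: "\<delta> (bas Am) Ap Bm = - \<delta> (bas Bm) Bm N/2"
    using e0 e1 e2 e3 e4 e5 e6 e7 e8 e9 asl by linarith
  have v10: "\<delta> (bas Am) Bm Ap = \<delta> (bas Bm) Bm N/2"
    using e0 e1 e2 e3 e4 e5 e6 e7 e8 e9 asl by linarith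
  have v11: "\<delta> (bas Bp) N Bp = - \<delta> (bas Bm) Bm N"
    using e0 e1 e2 e3 e4 e5 e6 e7 e8 e9 asl by linarith
  have v12: "\<delta> (bas Bp) Bp N = \<delta> (bas Bm) Bm N"
    using e0 e1 e2 e3 e4 e5 e6 e7 e8 e9 asl by linarith
  have v13: "\<delta> (bas Bp) M Bp = - \<delta> (bas Bm) Bm N - \<delta> (bas Bm) M Bm"
    using e0 e1 e2 e3 e4 e5 e6 e7 e8 e9 asl by linarith
  have v14: "\<delta> (bas Bp) Bp M = \<delta> (bas Bm) Bm N + \<delta> (bas Bm) M Bm"
    using e0 e1 e2 e3 e4 e5 e6 e7 e8 e9 asl by linarith
  have v15: "\<delta> (bas Bp) Ap Ap = 0"
    using e0 e1 e2 e3 e4 e5 e6 e7 e8 e9 asl by linarith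
  have v16: "\<delta> (bas Bm) N Bm = - \<delta> (bas Bm) Bm N"
    using e0 e1 e2 e3 e4 e5 e6 e7 e8 e9 asl by linarith
  have v17: "\<delta> (bas Bm) Bm M = - \<delta> (bas Bm) M Bm"
    using e0 e1 e2 e3 e4 e5 e6 e7 e8 e9 asl by linarith
  have v18: "\<delta> (bas Bm) Am Am = 0"
    using e0 e1 e2 e3 e4 e5 e6 e7 e8 e9 asl by linarith
  have v19: "\<delta> (bas M) N N = 0"
    using e0 e1 e2 e3 e4 e5 e6 e7 e8 e9 asl by linarith
  have v20: "\<delta> (bas M) M M = 0"
    using e0 e1 e2 e3 e4 e5 e6 e7 e8 e9 asl by linarith
  have v21: "\<delta> (bas M) N M = 0"
    using e0 e1 e2 e3 e4 e5 e6 e7 e8 e9 asl by linarith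
  have v22: "\<delta> (bas M) M N = 0"
    using e0 e1 e2 e3 e4 e5 e6 e7 e8 e9 asl by linarith
  have v23: "\<delta> (bas M) Ap Am = 0"
    using e0 e1 e2 e3 e4 e5 e6 e7 e8 e9 asl by linarith
  have v24: "\<delta> (bas M) Am Ap = 0"
    using e0 e1 e2 e3 e4 e5 e6 e7 e8 e9 asl by linarith
  have v25: "\<delta> (bas M) Bp Bm = 0"
    using e0 e1 e2 e3 e4 e5 e6 e7 e8 e9 asl by linarith
  have v26: "\<delta> (bas M) Bm Bp = 0"
    using e0 e1 e2 e3 e4 e5 e6 e7 e8 e9 asl by linarith
  note vals = v0 v1 v2 v3 v4 v5 v6 v7 v8 v9 v10 v11 v12 v13 v14 v15 v16 v17 v18 v19 v20 v21 v22 v23 v24 v25 v26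
  have J: "dual_br \<delta> (bas N) (dual_br \<delta> (bas Ap) (bas Bm)) Am + dual_br \<delta> (bas Ap) (dual_br \<delta> (bas Bm) (bas N)) Am
     + dual_br \<delta> (bas Bm) (dual_br \<delta> (bas N) (bas Ap)) Am = 0"
  proof -
    have "\<forall>\<xi> \<eta> \<zeta>. (\<lambda>i. dual_br \<delta> \<xi> (dual_br \<delta> \<eta> \<zeta>) i + dual_br \<delta> \<eta> (dual_br \<delta> \<zeta> \<xi>) i
                   + dual_br \<delta> \<zeta> (dual_br \<delta> \<xi> \<eta>) i) = (\<lambda>i. 0)"
      using dl unfolding dual_is_lie_def by blast
    then show ?thesis by metis
  qed
  have pp: "\<delta> (bas Bm) Bm N * \<delta> (bas Bm) Bm N = 0"
    using J unfolding dual_bas sum_gen by (simp add: bas_app zr wt_def vals algebra_simps)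
  have p0: "\<delta> (bas Bm) Bm N = 0" using pp by simp
  have all: "\<delta> (bas x) j k = cob (rr (- \<delta> (bas Bm) M Bm / 2) (\<delta> (bas Am) M Am - \<delta> (bas Bm) M Bm / 2)) (bas x) j k" for x j k
    by (cases x; cases j; cases k) (simp_all add: cobN cobAp cobAm cobBp cobBm cobM wedge_def bas_app zr wt_def vals p0 as[of Bm N Bm] D0)
  let ?r = "rr (- \<delta> (bas Bm) M Bm / 2) (\<delta> (bas Am) M Am - \<delta> (bas Bm) M Bm / 2)"
  have fin: "\<delta> X j k = cob ?r X j k" for X j k
  proof -
    have "\<delta> X j k = (\<Sum>a\<in>UNIV. X a * \<delta> (bas a) j k)" by (rule lin_expand[OF lin])
    also have "\<dots> = (\<Sum>a\<in>UNIV. X a * cob ?r (bas a) j k)"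
      by (rule sum.cong[OF refl], rule arg_cong[OF all])
    also have "\<dots> = cob ?r X j k" by (rule cob_expand[symmetric])
    finally show ?thesis .
  qed
  have "\<forall>X. \<delta> X = cob ?r X" by (intro allI ext fin)
  then show ?thesis by blast
qed

lemma nz: "((\<lambda>x y z. - (c2 ^ 2) * wedge3 (bas Ap) (bas Am) (bas M) x y z) = (\<lambda>x y z. 0)) \<longleftrightarrow> c2 = (0::real)"
proof
  assume h: "(\<lambda>x y z. - (c2 ^ 2) * wedge3 (bas Ap) (bas Am) (bas M) x y z) = (\<lambda>x y z. 0)"
  have "- (c2 ^ 2) * wedge3 (bas Ap) (bas Am) (bas M) Ap Am M = 0"
    using fun_cong[OF fun_cong[OF fun_cong[OF h, of Ap], of Am], of M] by simp
  then show "c2 = 0" by (simp add: wedge3_def bas_app)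
next
  assume "c2 = 0"
  then show "(\<lambda>x y z. - (c2 ^ 2) * wedge3 (bas Ap) (bas Am) (bas M) x y z) = (\<lambda>x y z. 0)" by simp
qed

theorem mainTheorem1:
  shows
   "(\<forall>\<delta>. lie_bialgebra \<delta> \<longrightarrow>
        (\<delta> (bas N) = (\<lambda>j k. 0) \<longleftrightarrow>
           (\<exists>c1 c2. \<forall>X. \<delta> X = cob (rr c1 c2) X)))
    \<and> (\<forall>c1 c2.
        cob (rr c1 c2) (bas N) = (\<lambda>j k. 0)
      \<and> cob (rr c1 c2) (bas M) = (\<lambda>j k. 0)
      \<and> cob (rr c1 c2) (bas Ap) = (\<lambda>j k. - (c1 + c2) * wedge (bas Ap) (bas M) j k)
      \<and> cob (rr c1 c2) (bas Am) = (\<lambda>j k. (c1 - c2) * wedge (bas Am) (bas M) j k)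
      \<and> cob (rr c1 c2) (bas Bp) = (\<lambda>j k. - 2 * c1 * wedge (bas Bp) (bas M) j k)
      \<and> cob (rr c1 c2) (bas Bm) = (\<lambda>j k. 2 * c1 * wedge (bas Bm) (bas M) j k)
      \<and> schouten (rr c1 c2) = (\<lambda>x y z. - (c2 ^ 2) * wedge3 (bas Ap) (bas Am) (bas M) x y z)
      \<and> (CYBE (rr c1 c2) \<longleftrightarrow> c2 = 0)
      \<and> (standard_r (rr c1 c2) \<longleftrightarrow> c2 \<noteq> 0))"
proof -
  have A: "\<forall>\<delta>. lie_bialgebra \<delta> \<longrightarrow>
        (\<delta> (bas N) = (\<lambda>j k. 0) \<longleftrightarrow> (\<exists>c1 c2. \<forall>X. \<delta> X = cob (rr c1 c2) X))"
  proof (intro allI impI iffI)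
    fix \<delta> assume LB: "lie_bialgebra \<delta>"
    { assume "\<delta> (bas N) = (\<lambda>j k. 0)"
      then show "\<exists>c1 c2. \<forall>X. \<delta> X = cob (rr c1 c2) X" by (rule part1[OF LB]) }
    { assume "\<exists>c1 c2. \<forall>X. \<delta> X = cob (rr c1 c2) X"
      then obtain c1 c2 where "\<forall>X. \<delta> X = cob (rr c1 c2) X" by blast
      then show "\<delta> (bas N) = (\<lambda>j k. 0)" using cobN by simp }
  qed
  have B: "\<forall>c1 c2.
        cob (rr c1 c2) (bas N) = (\<lambda>j k. 0)
      \<and> cob (rr c1 c2) (bas M) = (\<lambda>j k. 0)
      \<and> cob (rr c1 c2) (bas Ap) = (\<lambda>j k. - (c1 + c2) * wedge (bas Ap) (bas M) j k)
      \<and> cob (rr c1 c2) (bas Am) = (\<lambda>j k. (c1 - c2) * wedge (bas Am) (bas M) j k)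
      \<and> cob (rr c1 c2) (bas Bp) = (\<lambda>j k. - 2 * c1 * wedge (bas Bp) (bas M) j k)
      \<and> cob (rr c1 c2) (bas Bm) = (\<lambda>j k. 2 * c1 * wedge (bas Bm) (bas M) j k)
      \<and> schouten (rr c1 c2) = (\<lambda>x y z. - (c2 ^ 2) * wedge3 (bas Ap) (bas Am) (bas M) x y z)
      \<and> (CYBE (rr c1 c2) \<longleftrightarrow> c2 = 0)
      \<and> (standard_r (rr c1 c2) \<longleftrightarrow> c2 \<noteq> 0)"
  proof (intro allI conjI)
    fix c1 c2 :: real
    show "CYBE (rr c1 c2) \<longleftrightarrow> c2 = 0" unfolding CYBE_def schout by (rule nz)
    show "standard_r (rr c1 c2) \<longleftrightarrow> c2 \<noteq> 0" unfolding standard_r_def schout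
      using nz[of c2] adt3_w[of _ "- (c2 ^ 2)"] by simp
  qed (simp_all add: cobN cobM cobAp cobAm cobBp cobBm schout)
  show ?thesis using A B by blast
qed

end
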